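(* Let $H\in C^\infty(\mathbb{R}^2)$ be convex and let $U\subset\mathbb{R}^2$ be a domain. For every $v\in C^\infty(U)$, $$2(-\det D^2v)[\det D^2_{pp}H(Dv)]=\operatorname{div}\Big\{D^2_{pp}H(Dv)D[H(Dv)]-\operatorname{div}[D_pH(Dv)]\,D_pH(Dv)\Big\}\quad\text{in }U.$$ *)

theory Defs
  imports "HOL-Analysis.Analysis"
begin

definition pd :: "nat \<Rightarrow> (real \<times> real \<Rightarrow> real) \<Rightarrow> real \<times> real \<Rightarrow> real" where
  "pd i f = (\<lambda>z. if i = 0 then deriv (\<lambda>t. f (t, snd z)) (fst z)
                          else deriv (\<lambda>t. f (fst z, t)) (snd z))"

definition iter_pd :: "nat list \<Rightarrow> (real \<times> real \<Rightarrow> real) \<Rightarrow> real \<times> real \<Rightarrow> real" where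
  "iter_pd is f = foldr pd is f"

definition smooth_on :: "(real \<times> real) set \<Rightarrow> (real \<times> real \<Rightarrow> real) \<Rightarrow> bool" where
  "smooth_on U f \<longleftrightarrow>
     (\<forall>is. continuous_on U (iter_pd is f) \<and>
        (\<forall>z\<in>U. (\<lambda>t. iter_pd is f (t, snd z)) differentiable (at (fst z)) \<and>
                (\<lambda>t. iter_pd is f (fst z, t)) differentiable (at (snd z))))"

end

theory Submission
  imports Defs
begin

lemma iter_pd_pd: "iter_pd is (pd i f) = iter_pd (is @ [i]) f"
  by (simp add: iter_pd_def)

lemma smooth_pd: "smooth_on S f \<Longrightarrow> smooth_on S (pd i f)"
  unfolding smooth_on_def iter_pd_pd by blast

lemma smooth_cont: "smooth_on S f \<Longrightarrow> continuous_on S f"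
  unfolding smooth_on_def by (metis foldr_Nil id_apply iter_pd_def)

lemma smooth_D0:
  assumes "smooth_on S f" "w \<in> S"
  shows "((\<lambda>s. f (s, snd w)) has_real_derivative pd 0 f w) (at (fst w))"
proof -
  have "(\<lambda>s. f (s, snd w)) differentiable (at (fst w))"
    using assms unfolding smooth_on_def by (metis foldr_Nil id_apply iter_pd_def)
  then show ?thesis unfolding pd_def by (simp add: DERIV_deriv_iff_real_differentiable)
qed

lemma smooth_D1:
  assumes "smooth_on S f" "w \<in> S"
  shows "((\<lambda>t. f (fst w, t)) has_real_derivative pd 1 f w) (at (snd w))"
proof -
  have "(\<lambda>t. f (fst w, t)) differentiable (at (snd w))"
    using assms unfolding smooth_on_def by (metis foldr_Nil id_apply iter_pd_def)
  then show ?thesis unfolding pd_def by (simp add: DERIV_deriv_iff_real_differentiable)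
qed

lemma frechet:
  assumes sm: "smooth_on S f" and S: "open S" and z: "z \<in> S"
  shows "(f has_derivative (\<lambda>h. pd 0 f z * fst h + pd 1 f z * snd h)) (at z)"
proof -
  obtain r where r: "r > 0" "ball z r \<subseteq> S" using S z open_contains_ball by blast
  obtain z1 z2 where zz: "z = (z1, z2)" by fastforce
  define e where "e = r / 2"
  have e: "e > 0" using r by (simp add: e_def)
  define X where "X = ball z1 e"
  define Y where "Y = ball z2 e"
  have XY: "X \<times> Y \<subseteq> S"
  proof
    fix w assume "w \<in> X \<times> Y"
    then obtain a b where w: "w = (a,b)" "dist a z1 < e" "dist b z2 < e"
      by (auto simp: X_def Y_def dist_commute)
    have "dist w z \<le> dist a z1 + dist b z2"
      unfolding w zz dist_prod_def using sqrt_sum_squares_le_sum_abs[of "dist a z1" "dist b z2"] by simp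
    also have "\<dots> < r" using w e_def by simp
    finally show "w \<in> S" using r by (auto simp: dist_commute)
  qed
  have fx: "((\<lambda>x. f (x, z2)) has_derivative (\<lambda>h. pd 0 f z * h)) (at z1 within X)"
    using smooth_D0[OF sm z] unfolding zz has_field_derivative_def
    by (simp add: has_derivative_at_withinI)
  have fy: "((\<lambda>y. f (x, y)) has_derivative blinfun_apply (blinfun_mult_right (pd 1 f (x, y)))) (at y within Y)"
    if "x \<in> X" "y \<in> Y" for x y
  proof -
    have "(x,y) \<in> S" using XY that by auto
    from smooth_D1[OF sm this] show ?thesis unfolding has_field_derivative_def
      by (simp add: has_derivative_at_withinI)
  qed
  have cont: "continuous (at (z1, z2) within X \<times> Y) (\<lambda>(x, y). blinfun_mult_right (pd 1 f (x, y)))"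
  proof -
    have "continuous_on S (pd 1 f)" using smooth_cont[OF smooth_pd[OF sm]] .
    then have "isCont (pd 1 f) z" using S z continuous_on_eq_continuous_at by blast
    then have "isCont (\<lambda>w. blinfun_mult_right (pd 1 f w)) z"
      by (rule bounded_linear.continuous[OF bounded_linear_blinfun_mult_right])
    then show ?thesis unfolding zz by (simp add: case_prod_beta' continuous_at_imp_continuous_within)
  qed
  have "((\<lambda>(x, y). f (x, y)) has_derivative (\<lambda>(tx, ty). pd 0 f z * tx + blinfun_mult_right (pd 1 f (z1, z2)) ty)) (at (z1, z2) within X \<times> Y)"
    by (rule has_derivative_partialsI[OF fx fy cont]) (auto simp: Y_def e)
  moreover have "open (X \<times> Y)" "(z1,z2) \<in> X \<times> Y" by (auto simp: X_def Y_def open_Times e)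
  ultimately have "((\<lambda>(x, y). f (x, y)) has_derivative (\<lambda>(tx, ty). pd 0 f z * tx + blinfun_mult_right (pd 1 f (z1, z2)) ty)) (at (z1, z2))"
    by (metis at_within_open)
  then show ?thesis unfolding zz by (simp add: case_prod_beta')
qed

lemma clairaut:
  assumes sm: "smooth_on S f" and S: "open S" and z: "z \<in> S"
  shows "pd 1 (pd 0 f) z = pd 0 (pd 1 f) z"
proof (rule ccontr)
  assume ne: "pd 1 (pd 0 f) z \<noteq> pd 0 (pd 1 f) z"
  define A where "A = pd 1 (pd 0 f)"
  define B where "B = pd 0 (pd 1 f)"
  define e where "e = \<bar>A z - B z\<bar> / 2"
  have e: "e > 0" using ne by (simp add: e_def A_def B_def)
  have smA: "smooth_on S (pd 0 f)" and smB: "smooth_on S (pd 1 f)" using smooth_pd sm by auto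
  have "isCont A z" unfolding A_def using smooth_cont[OF smooth_pd[OF smA]] S z continuous_on_eq_continuous_at by blast
  then obtain d1 where d1: "d1 > 0" "\<And>w. dist w z < d1 \<Longrightarrow> \<bar>A w - A z\<bar> < e"
    using e unfolding continuous_at_eps_delta by (metis dist_real_def)
  have "isCont B z" unfolding B_def using smooth_cont[OF smooth_pd[OF smB]] S z continuous_on_eq_continuous_at by blast
  then obtain d2 where d2: "d2 > 0" "\<And>w. dist w z < d2 \<Longrightarrow> \<bar>B w - B z\<bar> < e"
    using e unfolding continuous_at_eps_delta by (metis dist_real_def)
  obtain r where r: "r > 0" "ball z r \<subseteq> S" using S z open_contains_ball by blast
  obtain z1 z2 where zz: "z = (z1, z2)" by fastforce
  define h where "h = min r (min d1 d2) / 3"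
  have h: "h > 0" using r d1 d2 by (simp add: h_def)
  have Q: "(s,t) \<in> S \<and> \<bar>A (s,t) - A z\<bar> < e \<and> \<bar>B (s,t) - B z\<bar> < e"
    if "z1 \<le> s" "s \<le> z1 + h" "z2 \<le> t" "t \<le> z2 + h" for s t
  proof -
    have "dist (s,t) z \<le> dist s z1 + dist t z2"
      unfolding zz dist_prod_def using sqrt_sum_squares_le_sum_abs[of "dist s z1" "dist t z2"] by simp
    also have "\<dots> \<le> 2 * h" using that by (simp add: dist_real_def)
    also have "\<dots> < min r (min d1 d2)" using h h_def r d1 d2 by (simp add: min_def)
    finally have "dist (s,t) z < min r (min d1 d2)" .
    then show ?thesis using r d1 d2 by (auto simp: dist_commute)
  qed
  define \<Delta> where "\<Delta> = f (z1+h, z2+h) - f (z1+h, z2) - f (z1, z2+h) + f (z1, z2)"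
  have "\<exists>\<xi>. z1 < \<xi> \<and> \<xi> < z1 + h \<and>
     (f (z1+h, z2+h) - f (z1+h, z2)) - (f (z1, z2+h) - f (z1, z2)) = (z1 + h - z1) * (pd 0 f (\<xi>, z2+h) - pd 0 f (\<xi>, z2))"
  proof (rule MVT2[where f = "\<lambda>s. f (s, z2+h) - f (s, z2)"])
    show "z1 < z1 + h" using h by simp
    fix s assume "z1 \<le> s" "s \<le> z1 + h"
    then have "(s, z2+h) \<in> S" "(s, z2) \<in> S" using Q h by auto
    from smooth_D0[OF sm this(1)] smooth_D0[OF sm this(2)]
    show "((\<lambda>s. f (s, z2 + h) - f (s, z2)) has_real_derivative pd 0 f (s, z2 + h) - pd 0 f (s, z2)) (at s)"
      by (auto intro!: derivative_eq_intros)
  qed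
  then obtain \<xi> where xi: "z1 < \<xi>" "\<xi> < z1 + h" "\<Delta> = h * (pd 0 f (\<xi>, z2+h) - pd 0 f (\<xi>, z2))"
    unfolding \<Delta>_def by auto
  have "\<exists>\<eta>. z2 < \<eta> \<and> \<eta> < z2 + h \<and> pd 0 f (\<xi>, z2+h) - pd 0 f (\<xi>, z2) = (z2 + h - z2) * A (\<xi>, \<eta>)"
  proof (rule MVT2[where f = "\<lambda>t. pd 0 f (\<xi>, t)"])
    show "z2 < z2 + h" using h by simp
    fix t assume "z2 \<le> t" "t \<le> z2 + h"
    then have "(\<xi>, t) \<in> S" using Q xi by auto
    from smooth_D1[OF smA this]
    show "((\<lambda>t. pd 0 f (\<xi>, t)) has_real_derivative A (\<xi>, t)) (at t)" by (simp add: A_def)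
  qed
  then obtain \<eta> where eta: "z2 < \<eta>" "\<eta> < z2 + h" "\<Delta> = h * h * A (\<xi>, \<eta>)"
    using xi by auto
  have "\<exists>\<eta>. z2 < \<eta> \<and> \<eta> < z2 + h \<and>
     (f (z1+h, z2+h) - f (z1, z2+h)) - (f (z1+h, z2) - f (z1, z2)) = (z2 + h - z2) * (pd 1 f (z1+h, \<eta>) - pd 1 f (z1, \<eta>))"
  proof (rule MVT2[where f = "\<lambda>t. f (z1+h, t) - f (z1, t)"])
    show "z2 < z2 + h" using h by simp
    fix t assume "z2 \<le> t" "t \<le> z2 + h"
    then have "(z1+h, t) \<in> S" "(z1, t) \<in> S" using Q h by auto
    from smooth_D1[OF sm this(1)] smooth_D1[OF sm this(2)]
    show "((\<lambda>t. f (z1+h, t) - f (z1, t)) has_real_derivative pd 1 f (z1+h, t) - pd 1 f (z1, t)) (at t)"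
      by (auto intro!: derivative_eq_intros)
  qed
  then obtain \<eta>' where eta': "z2 < \<eta>'" "\<eta>' < z2 + h" "\<Delta> = h * (pd 1 f (z1+h, \<eta>') - pd 1 f (z1, \<eta>'))"
    unfolding \<Delta>_def by (auto simp: algebra_simps)
  have "\<exists>\<xi>. z1 < \<xi> \<and> \<xi> < z1 + h \<and> pd 1 f (z1+h, \<eta>') - pd 1 f (z1, \<eta>') = (z1 + h - z1) * B (\<xi>, \<eta>')"
  proof (rule MVT2[where f = "\<lambda>s. pd 1 f (s, \<eta>')"])
    show "z1 < z1 + h" using h by simp
    fix s assume "z1 \<le> s" "s \<le> z1 + h"
    then have "(s, \<eta>') \<in> S" using Q eta' by auto
    from smooth_D0[OF smB this]
    show "((\<lambda>s. pd 1 f (s, \<eta>')) has_real_derivative B (s, \<eta>')) (at s)" by (simp add: B_def)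
  qed
  then obtain \<xi>' where xi': "z1 < \<xi>'" "\<xi>' < z1 + h" "\<Delta> = h * h * B (\<xi>', \<eta>')"
    using eta' by auto
  have "A (\<xi>, \<eta>) = B (\<xi>', \<eta>')" using eta(3) xi'(3) h by simp
  moreover have "\<bar>A (\<xi>, \<eta>) - A z\<bar> < e" using Q[of \<xi> \<eta>] xi eta by auto
  moreover have "\<bar>B (\<xi>', \<eta>') - B z\<bar> < e" using Q[of \<xi>' \<eta>'] xi' eta' by auto
  ultimately show False unfolding e_def by (simp add: abs_if split: if_splits)
qed

definition lin :: "nat \<Rightarrow> real \<times> real \<Rightarrow> real \<Rightarrow> real \<times> real" where
  "lin j y t = (if j = 0 then (t, snd y) else (fst y, t))"
definition crd :: "nat \<Rightarrow> real \<times> real \<Rightarrow> real" where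
  "crd j y = (if j = 0 then fst y else snd y)"
definition PD :: "nat \<Rightarrow> (real \<times> real \<Rightarrow> real) \<Rightarrow> real \<times> real \<Rightarrow> real \<Rightarrow> bool" where
  "PD j f y D \<longleftrightarrow> ((\<lambda>t. f (lin j y t)) has_real_derivative D) (at (crd j y))"

lemma lin_crd[simp]: "lin j y (crd j y) = y"
  by (simp add: lin_def crd_def)

lemma pd_eq: "PD j f y D \<Longrightarrow> pd j f y = D"
  unfolding PD_def pd_def lin_def crd_def by (cases "j = 0") (auto intro: DERIV_imp_deriv)

lemma pd_ne0: "j \<noteq> 0 \<Longrightarrow> pd j f = pd 1 f"
  by (simp add: pd_def)

lemma PD_sm:
  assumes "smooth_on S f" "y \<in> S"
  shows "PD j f y (pd j f y)"
proof (cases "j = 0")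
  case True
  then show ?thesis unfolding PD_def lin_def crd_def using smooth_D0[OF assms] by simp
next
  case False
  then have e: "pd j f = pd 1 f" by (rule pd_ne0)
  show ?thesis unfolding PD_def lin_def crd_def e using smooth_D1[OF assms] False by simp
qed

lemma PD_add: "PD j f y Df \<Longrightarrow> PD j g y Dg \<Longrightarrow> PD j (\<lambda>z. f z + g z) y (Df + Dg)"
  unfolding PD_def by (auto intro!: derivative_eq_intros)

lemma PD_diff: "PD j f y Df \<Longrightarrow> PD j g y Dg \<Longrightarrow> PD j (\<lambda>z. f z - g z) y (Df - Dg)"
  unfolding PD_def by (auto intro!: derivative_eq_intros)

lemma PD_mult: "PD j f y Df \<Longrightarrow> PD j g y Dg \<Longrightarrow> PD j (\<lambda>z. f z * g z) y (Df * g y + f y * Dg)"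
  unfolding PD_def by (auto intro!: derivative_eq_intros)

lemma PD_chain:
  assumes g: "smooth_on UNIV g" and a: "PD j a y Da" and b: "PD j b y Db"
  shows "PD j (\<lambda>z. g (a z, b z)) y (pd 0 g (a y, b y) * Da + pd 1 g (a y, b y) * Db)"
proof -
  let ?c = "crd j y"
  have c: "((\<lambda>t. (a (lin j y t), b (lin j y t))) has_derivative (\<lambda>h. (Da * h, Db * h))) (at ?c)"
    using a b unfolding PD_def has_field_derivative_def by (intro has_derivative_Pair) auto
  have gd: "(g has_derivative (\<lambda>h. pd 0 g (a y, b y) * fst h + pd 1 g (a y, b y) * snd h)) (at (a (lin j y ?c), b (lin j y ?c)))"
    using frechet[OF g] by simp
  have "((\<lambda>t. g (a (lin j y t), b (lin j y t))) has_derivative (\<lambda>h. pd 0 g (a y, b y) * fst (Da * h, Db * h) + pd 1 g (a y, b y) * snd (Da * h, Db * h))) (at ?c)"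
    using has_derivative_compose[OF c gd] by simp
  moreover have "(\<lambda>h. pd 0 g (a y, b y) * fst (Da * h, Db * h) + pd 1 g (a y, b y) * snd (Da * h, Db * h)) = (*) (pd 0 g (a y, b y) * Da + pd 1 g (a y, b y) * Db)"
    by (auto simp: algebra_simps)
  ultimately show ?thesis unfolding PD_def has_field_derivative_def by simp
qed

lemma PD_local:
  assumes S: "open S" "y \<in> S" and eq: "\<And>z. z \<in> S \<Longrightarrow> f z = g z" and f: "PD j f y D"
  shows "PD j g y D"
proof -
  have cl: "continuous_on UNIV (lin j y)" unfolding lin_def by (cases "j = 0") (auto intro!: continuous_intros)
  have "open (lin j y -` S)" using open_vimage[OF S(1) cl] by simp
  moreover have "crd j y \<in> lin j y -` S" using S by simp
  ultimately show ?thesis using f unfolding PD_def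
    using has_field_derivative_transform_within_open[of "\<lambda>t. f (lin j y t)" D "crd j y" "lin j y -` S" "\<lambda>t. g (lin j y t)"]
    by (auto simp: eq)
qed

lemma PD_lin2:
  assumes "smooth_on UNIV g0" "smooth_on UNIV g1" "PD k a y da" "PD k b y db" "PD k \<alpha> y d\<alpha>" "PD k \<beta> y d\<beta>"
  shows "PD k (\<lambda>z. g0 (a z, b z) * \<alpha> z + g1 (a z, b z) * \<beta> z) y
     ((pd 0 g0 (a y, b y) * da + pd 1 g0 (a y, b y) * db) * \<alpha> y + g0 (a y, b y) * d\<alpha>
    + ((pd 0 g1 (a y, b y) * da + pd 1 g1 (a y, b y) * db) * \<beta> y + g1 (a y, b y) * d\<beta>))"
  by (rule PD_add[OF PD_mult[OF PD_chain[OF assms(1,3,4)] assms(5)] PD_mult[OF PD_chain[OF assms(2,3,4)] assms(6)]])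

lemma pd_comp:
  assumes "smooth_on UNIV g" "smooth_on U a" "smooth_on U b" "y \<in> U"
  shows "pd j (\<lambda>z. g (a z, b z)) y = pd 0 g (a y, b y) * pd j a y + pd 1 g (a y, b y) * pd j b y"
  by (rule pd_eq[OF PD_chain[OF assms(1) PD_sm[OF assms(2,4)] PD_sm[OF assms(3,4)]]])

lemma PD_comp_pd:
  assumes g: "smooth_on UNIV g" and a: "smooth_on U a" and b: "smooth_on U b" and U: "open U" and x: "x \<in> U"
  shows "PD k (pd j (\<lambda>z. g (a z, b z))) x
     ((pd 0 (pd 0 g) (a x, b x) * pd k a x + pd 1 (pd 0 g) (a x, b x) * pd k b x) * pd j a x + pd 0 g (a x, b x) * pd k (pd j a) x
    + ((pd 0 (pd 1 g) (a x, b x) * pd k a x + pd 1 (pd 1 g) (a x, b x) * pd k b x) * pd j b x + pd 1 g (a x, b x) * pd k (pd j b) x))"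
proof (rule PD_local[OF U x])
  show "PD k (\<lambda>z. pd 0 g (a z, b z) * pd j a z + pd 1 g (a z, b z) * pd j b z) x
     ((pd 0 (pd 0 g) (a x, b x) * pd k a x + pd 1 (pd 0 g) (a x, b x) * pd k b x) * pd j a x + pd 0 g (a x, b x) * pd k (pd j a) x
    + ((pd 0 (pd 1 g) (a x, b x) * pd k a x + pd 1 (pd 1 g) (a x, b x) * pd k b x) * pd j b x + pd 1 g (a x, b x) * pd k (pd j b) x))"
    by (rule PD_lin2[OF smooth_pd[OF g] smooth_pd[OF g] PD_sm[OF a x] PD_sm[OF b x] PD_sm[OF smooth_pd[OF a] x] PD_sm[OF smooth_pd[OF b] x]])
  fix z assume "z \<in> U"
  then show "pd 0 g (a z, b z) * pd j a z + pd 1 g (a z, b z) * pd j b z = pd j (\<lambda>z. g (a z, b z)) z"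
    using pd_comp[OF g a b] by simp
qed

lemma PD_W:
  assumes "PD k G0 y dG0" "PD k G1 y dG1" "PD k E0 y dE0" "PD k E1 y dE1" "PD k F0 y dF0" "PD k F1 y dF1" "PD k P y dP"
  shows "PD k (\<lambda>z. G0 z * E0 z + G1 z * E1 z - (F0 z + F1 z) * P z) y
    (dG0 * E0 y + G0 y * dE0 + (dG1 * E1 y + G1 y * dE1) - ((dF0 + dF1) * P y + (F0 y + F1 y) * dP))"
  by (rule PD_diff[OF PD_add[OF PD_mult[OF assms(1,3)] PD_mult[OF assms(2,4)]] PD_mult[OF PD_add[OF assms(5,6)] assms(7)]])

lemma poly: fixes h0 h1 h00 h01 h11 h000 h001 h011 h111 v00 v01 v11 v000 v001 v011 v111 :: real
  shows "2 * - (v00 * v11 - v01 * v01) * (h00 * h11 - h01 * h01) =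
     (h000 * v00 + h001 * v01) * (h0 * v00 + h1 * v01) +
     h00 *
     ((h00 * v00 + h01 * v01) * v00 + h0 * v000 +
      ((h01 * v00 + h11 * v01) * v01 + h1 * v001)) +
     ((h001 * v00 + h011 * v01) * (h0 * v01 + h1 * v11) +
      h01 *
      ((h00 * v00 + h01 * v01) * v01 + h0 * v001 +
       ((h01 * v00 + h11 * v01) * v11 + h1 * v011))) -
     (((h000 * v00 + h001 * v01) * v00 + h00 * v000 +
       ((h001 * v00 + h011 * v01) * v01 + h01 * v001) +
       ((h001 * v00 + h011 * v01) * v01 + h01 * v001 +
        ((h011 * v00 + h111 * v01) * v11 + h11 * v011))) *
      h0 +
      (h00 * v00 + h01 * v01 + (h01 * v01 + h11 * v11)) *
      (h00 * v00 + h01 * v01)) +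
     ((h001 * v01 + h011 * v11) * (h0 * v00 + h1 * v01) +
      h01 *
      ((h00 * v01 + h01 * v11) * v00 + h0 * v001 +
       ((h01 * v01 + h11 * v11) * v01 + h1 * v011)) +
      ((h011 * v01 + h111 * v11) * (h0 * v01 + h1 * v11) +
       h11 *
       ((h00 * v01 + h01 * v11) * v01 + h0 * v011 +
        ((h01 * v01 + h11 * v11) * v11 + h1 * v111))) -
      (((h000 * v01 + h001 * v11) * v00 + h00 * v001 +
        ((h001 * v01 + h011 * v11) * v01 + h01 * v011) +
        ((h001 * v01 + h011 * v11) * v01 + h01 * v011 +
         ((h011 * v01 + h111 * v11) * v11 + h11 * v111))) *
       h1 +
       (h00 * v00 + h01 * v01 + (h01 * v01 + h11 * v11)) *
       (h01 * v01 +
        h11 *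
        v11)))"
  by (simp add: algebra_simps)

lemma sum2: "(\<Sum>j\<in>{0::nat,1}. f j) = f 0 + f 1" by simp

theorem lemma2p2:
  fixes H v :: "real \<times> real \<Rightarrow> real" and U :: "(real \<times> real) set"
  assumes "smooth_on UNIV H" and "convex_on UNIV H"
    and "open U" and "connected U"
    and "smooth_on U v"
    and "x \<in> U"
  shows
    "(let Dv = (\<lambda>y. (pd 0 v y, pd 1 v y));
          HDv = (\<lambda>y. H (Dv y));
          HpDv = (\<lambda>i y. pd i H (Dv y));
          HppDv = (\<lambda>i j y. pd j (pd i H) (Dv y));
          divHp = (\<lambda>y. pd 0 (HpDv 0) y + pd 1 (HpDv 1) y);
          W = (\<lambda>i y. (\<Sum>j\<in>{0,1}. HppDv i j y * pd j HDv y) - divHp y * HpDv i y)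
      in 2 * (- (pd 0 (pd 0 v) x * pd 1 (pd 1 v) x - pd 1 (pd 0 v) x * pd 0 (pd 1 v) x))
           * (HppDv 0 0 x * HppDv 1 1 x - HppDv 0 1 x * HppDv 1 0 x)
         = pd 0 (W 0) x + pd 1 (W 1) x)"
proof -
  have sH: "smooth_on UNIV H" using assms(1) .
  have sv: "smooth_on U v" using assms(5) .
  have U: "open U" using assms(3) .
  have x: "x \<in> U" using assms(6) .
  define a where "a = pd 0 v"
  define b where "b = pd 1 v"
  have sa: "smooth_on U a" and sb: "smooth_on U b" using smooth_pd[OF sv] by (auto simp: a_def b_def)
  have sH0: "smooth_on UNIV (pd 0 H)" and sH1: "smooth_on UNIV (pd 1 H)" using smooth_pd[OF sH] by auto
  note W0 = PD_W[OF PD_chain[OF smooth_pd[OF sH0] PD_sm[OF sa x] PD_sm[OF sb x]]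
                    PD_chain[OF smooth_pd[OF sH0] PD_sm[OF sa x] PD_sm[OF sb x]]
                    PD_comp_pd[OF sH sa sb U x] PD_comp_pd[OF sH sa sb U x]
                    PD_comp_pd[OF sH0 sa sb U x] PD_comp_pd[OF sH1 sa sb U x]
                    PD_chain[OF sH0 PD_sm[OF sa x] PD_sm[OF sb x]], of 0]
  note W1 = PD_W[OF PD_chain[OF smooth_pd[OF sH1] PD_sm[OF sa x] PD_sm[OF sb x]]
                    PD_chain[OF smooth_pd[OF sH1] PD_sm[OF sa x] PD_sm[OF sb x]]
                    PD_comp_pd[OF sH sa sb U x] PD_comp_pd[OF sH sa sb U x]
                    PD_comp_pd[OF sH0 sa sb U x] PD_comp_pd[OF sH1 sa sb U x]
                    PD_chain[OF sH1 PD_sm[OF sa x] PD_sm[OF sb x]], of 1]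
  have c1: "pd 0 (pd 1 H) = pd 1 (pd 0 H)"
  proof
    fix z show "pd 0 (pd 1 H) z = pd 1 (pd 0 H) z" using clairaut[OF sH open_UNIV, of z] by simp
  qed
  have c2: "pd 0 (pd 1 (pd 0 H)) = pd 1 (pd 0 (pd 0 H))"
  proof
    fix z show "pd 0 (pd 1 (pd 0 H)) z = pd 1 (pd 0 (pd 0 H)) z" using clairaut[OF sH0 open_UNIV, of z] by simp
  qed
  have c3: "pd 0 (pd 1 (pd 1 H)) = pd 1 (pd 1 (pd 0 H))"
  proof
    fix z
    have "pd 1 (pd 0 (pd 1 H)) z = pd 0 (pd 1 (pd 1 H)) z" using clairaut[OF sH1 open_UNIV, of z] by simp
    then show "pd 0 (pd 1 (pd 1 H)) z = pd 1 (pd 1 (pd 0 H)) z" unfolding c1 by simp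
  qed
  have loc: "\<And>z. z \<in> U \<Longrightarrow> pd 1 a z = pd 0 b z" using clairaut[OF sv U] by (simp add: a_def b_def)
  have v1: "pd 0 b x = pd 1 a x" using loc x by simp
  have vk: "pd k (pd 0 b) x = pd k (pd 1 a) x" for k
    using pd_eq[OF PD_local[OF U x loc PD_sm[OF smooth_pd[OF sa] x]]] by simp
  have v4: "pd 0 (pd 1 a) x = pd 1 (pd 0 a) x" using clairaut[OF sa U x] by simp
  have v2: "pd 0 (pd 0 b) x = pd 1 (pd 0 a) x" using vk[of 0] v4 by simp
  have v3: "pd 1 (pd 0 b) x = pd 1 (pd 1 a) x" using vk[of 1] by simp
  have v5: "pd 0 (pd 1 b) x = pd 1 (pd 1 a) x" using clairaut[OF sb U x] v3 by simp
  define h0 where "h0 = pd 0 H (a x, b x)"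
  define h1 where "h1 = pd 1 H (a x, b x)"
  define h00 where "h00 = pd 0 (pd 0 H) (a x, b x)"
  define h01 where "h01 = pd 1 (pd 0 H) (a x, b x)"
  define h11 where "h11 = pd 1 (pd 1 H) (a x, b x)"
  define h000 where "h000 = pd 0 (pd 0 (pd 0 H)) (a x, b x)"
  define h001 where "h001 = pd 1 (pd 0 (pd 0 H)) (a x, b x)"
  define h011 where "h011 = pd 1 (pd 1 (pd 0 H)) (a x, b x)"
  define h111 where "h111 = pd 1 (pd 1 (pd 1 H)) (a x, b x)"
  define v00 where "v00 = pd 0 a x"
  define v01 where "v01 = pd 1 a x"
  define v11 where "v11 = pd 1 b x"
  define v000 where "v000 = pd 0 (pd 0 a) x"
  define v001 where "v001 = pd 1 (pd 0 a) x"
  define v011 where "v011 = pd 1 (pd 1 a) x"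
  define v111 where "v111 = pd 1 (pd 1 b) x"
  show ?thesis
    unfolding Let_def a_def[symmetric] b_def[symmetric] sum2
    unfolding pd_eq[OF W0] pd_eq[OF W1] pd_comp[OF sH sa sb x] pd_comp[OF sH0 sa sb x] pd_comp[OF sH1 sa sb x]
    unfolding c1 c2 c3 v1 v2 v3 v4 v5
    unfolding h0_def[symmetric] h1_def[symmetric] h00_def[symmetric] h01_def[symmetric] h11_def[symmetric] h000_def[symmetric] h001_def[symmetric] h011_def[symmetric] h111_def[symmetric] v00_def[symmetric] v01_def[symmetric] v11_def[symmetric] v000_def[symmetric] v001_def[symmetric] v011_def[symmetric] v111_def[symmetric]
    by (rule poly)
qed

end
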